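(* Let $k\ge 1$ and $n=2^{k+1}-1$, and let $\Delta=3$, so that $T_{n,3}$ is the complete binary tree of height $k$ with all levels full. Then in every execution of the traversal procedure on $T_{n,3}$, the number of jump edges added in step (c) (not counting the final closing edge $\{v_n,1\}$) is the same, namely $$\sum_{i=0}^{k-1} f(i)+k=\frac{f(k+1)}{2}=\Bigl\lfloor \frac{n}{3}\Bigr\rfloor,$$ where $f$ is the function defined by $f(0)=0$ and $f(m)=2(m-1)+2\sum_{i=0}^{m-2}f(i)$ for $m\ge 1$.
   Context: Fix integers $\Delta\ge 3$ and $n\ge 3$, and put $b=\Delta-1$. The complete $\Delta$-ary tree $T_{n,\Delta}$ is the rooted tree on vertex set $\{1,\dots,n\}$ with root $1$ in which the children of a vertex $i$ are the integers $j$ with $b(i-1)+2\le j\le bi+1$ and $j\le n$ (equivalently, the parent of $j\ge 2$ is $\lfloor (j-2)/b\rfloor+1$). Thus every vertex has at most $\Delta-1$ children, all levels except possibly the last are full, and the last level is filled from the left. A leaf is a vertex other than the root having no children. Traversal procedure: start with edge set $E$ equal to the edge set of $T_{n,\Delta}$, all vertices unmarked, and $v_1=1$. For $k=1,\dots,n-1$: mark $v_k$; then (a) if $v_k\neq 1$ and the parent of $v_k$ is unmarked, let $v_{k+1}$ be the parent of $v_k$; (b) otherwise, if $v_k$ has an unmarked child, let $v_{k+1}$ be any unmarked child of $v_k$; (c) otherwise, let $v_{k+1}$ be any unmarked leaf $u$ and add the edge $\{v_k,u\}$ to $E$ (a "jump edge"). Finally mark $v_n$ and add the edge $\{v_n,1\}$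 to $E$ (if not already present). The output is the simple graph $G=(\{1,\dots,n\},E)$. An execution is any run of this procedure, i.e. any admissible sequence of choices in (b) and (c). *)

theory Defs
  imports Main
begin

(* Complete Delta-ary tree T_{n,Delta} on {1..n}, root 1, with b = Delta - 1. *)

definition tparent :: "nat \<Rightarrow> nat \<Rightarrow> nat" where
  "tparent b j = (j - 2) div b + 1"

definition tchild :: "nat \<Rightarrow> nat \<Rightarrow> nat \<Rightarrow> nat \<Rightarrow> bool" where
  "tchild n b i j \<longleftrightarrow> b * (i - 1) + 2 \<le> j \<and> j \<le> b * i + 1 \<and> j \<le> n"

definition tleaf :: "nat \<Rightarrow> nat \<Rightarrow> nat \<Rightarrow> bool" where
  "tleaf n b u \<longleftrightarrow> u \<in> {2..n} \<and> \<not> (\<exists>j. tchild n b u j)"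

definition case_a :: "nat \<Rightarrow> nat set \<Rightarrow> nat \<Rightarrow> bool" where
  "case_a b M x \<longleftrightarrow> x \<noteq> 1 \<and> tparent b x \<notin> M"

(* case (b) applies (given (a) does not) *)
definition case_b :: "nat \<Rightarrow> nat \<Rightarrow> nat set \<Rightarrow> nat \<Rightarrow> bool" where
  "case_b n b M x \<longleftrightarrow> (\<exists>j. tchild n b x j \<and> j \<notin> M)"

definition trav_step :: "nat \<Rightarrow> nat \<Rightarrow> nat set \<Rightarrow> nat \<Rightarrow> nat \<Rightarrow> bool" where
  "trav_step n b M x y \<longleftrightarrow>
     (if case_a b M x then y = tparent b x
      else if case_b n b M x then tchild n b x y \<and> y \<notin> M
      else tleaf n b y \<and> y \<notin> M)"

definition is_jump :: "nat \<Rightarrow> nat \<Rightarrow> nat set \<Rightarrow> nat \<Rightarrow> bool" where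
  "is_jump n b M x \<longleftrightarrow> \<not> case_a b M x \<and> \<not> case_b n b M x"

(* v 1, ..., v n is an execution of the traversal procedure on T_{n,Delta};
   after marking v_k, the marked set is {v_1,...,v_k} *)
definition execution :: "nat \<Rightarrow> nat \<Rightarrow> (nat \<Rightarrow> nat) \<Rightarrow> bool" where
  "execution n Delta v \<longleftrightarrow> v 1 = 1 \<and>
     (\<forall>k\<in>{1..n-1}. trav_step n (Delta - 1) (v ` {1..k}) (v k) (v (Suc k)))"

definition num_jumps :: "nat \<Rightarrow> nat \<Rightarrow> (nat \<Rightarrow> nat) \<Rightarrow> nat" where
  "num_jumps n Delta v = card {k\<in>{1..n-1}. is_jump n (Delta - 1) (v ` {1..k}) (v k)}"

fun fseq :: "nat \<Rightarrow> nat" where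
  "fseq 0 = 0"
| "fseq (Suc m) = 2 * m + 2 * (\<Sum>i<m. fseq i)"

end

theory Submission imports Defs begin

fun dep :: "nat \<Rightarrow> nat" where
  "dep u = (if u \<le> 1 then 0 else Suc (dep (u div 2)))"
declare dep.simps[simp del]

lemma dep_bounds: "u \<ge> 1 \<Longrightarrow> 2 ^ dep u \<le> u \<and> u < 2 ^ Suc (dep u)"
proof (induction u rule: dep.induct)
  case (1 u)
  show ?case
  proof (cases "u \<le> 1")
    case True then have "u = 1" using 1 by auto
    then show ?thesis by (simp add: dep.simps)
  next
    case False
    then have d: "dep u = Suc (dep (u div 2))" by (simp add: dep.simps)
    have ih: "2^dep (u div 2) \<le> u div 2 \<and> u div 2 < 2^Suc(dep (u div 2))" using 1 False by auto
    have "u div 2 * 2 \<le> u" "u < u div 2 * 2 + 2" by auto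
    then show ?thesis using ih unfolding d by auto
  qed
qed

lemma dep_unique: assumes "u \<ge> 1" "2^d \<le> u" "u < 2^Suc d" shows "dep u = d"
proof -
  have b: "2 ^ dep u \<le> u \<and> u < 2 ^ Suc (dep u)" using dep_bounds assms(1) by blast
  have "(2::nat)^d < 2^Suc(dep u)" using b assms by linarith
  then have "d < Suc (dep u)" by (rule power_less_imp_less_exp[rotated]) simp
  moreover have "(2::nat)^dep u < 2^Suc d" using b assms by linarith
  then have "dep u < Suc d" by (rule power_less_imp_less_exp[rotated]) simp
  ultimately show ?thesis by simp
qed

lemma dep_div: "u \<ge> 2 \<Longrightarrow> dep u = Suc (dep (u div 2))" by (simp add: dep.simps)

lemma par_eq: "j \<ge> 2 \<Longrightarrow> tparent 2 j = j div 2"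
  unfolding tparent_def by presburger

lemma tchild_iff: "tchild n 2 y c \<longleftrightarrow> y \<ge> 1 \<and> (c = 2*y \<or> c = 2*y+1) \<and> c \<le> n"
  unfolding tchild_def by (cases y) auto

definition gg :: "nat \<Rightarrow> int" where "gg i = int (fseq i) + 1"
definition DD :: "nat \<Rightarrow> int" where "DD m = (\<Sum>i<m. gg i)"

lemma gg0: "gg 0 = 1" by (simp add: gg_def)
lemma DD0: "DD 0 = 0" by (simp add: DD_def)
lemma DD_Suc: "DD (Suc m) = DD m + gg m" by (simp add: DD_def)
lemma gg_Suc: "gg (Suc m) = 1 + 2 * DD m"
  by (simp add: gg_def DD_def sum.distrib of_nat_sum)

lemma closed: "3 * DD m = 2^(m+1) - 1 - (if even m then 1 else 0) \<and>
               3 * gg m = 2^(m+1) + (if even m then 1 else -1)"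
proof (induction m)
  case 0 then show ?case by (simp add: gg0 DD0)
next
  case (Suc m)
  then show ?case by (auto simp: DD_Suc gg_Suc algebra_simps)
qed



context fixes k n :: nat assumes kn: "n = 2^(k+1) - 1" and k1: "k \<ge> 1" begin

lemma n3: "n \<ge> 3"
proof -
  have "(2::nat)^(k+1) \<ge> 2^2" using k1 by (intro power_increasing) auto
  then show ?thesis using kn by simp
qed

lemma dep_le: "u \<in> {1..n} \<Longrightarrow> dep u \<le> k"
proof -
  assume u: "u \<in> {1..n}"
  have "2 ^ dep u \<le> u" using dep_bounds[of u] u by auto
  moreover have "u < 2^(k+1)" using u kn by auto
  ultimately have "(2::nat) ^ dep u < 2^(Suc k)" by simp
  then have "dep u < Suc k" by (rule power_less_imp_less_exp[rotated]) simp
  then show ?thesis by simp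
qed

lemma dbl: assumes "u \<ge> 1" shows "2*u \<le> n \<longleftrightarrow> dep u < k"
proof
  assume "2*u \<le> n"
  moreover have "(2::nat)^k > 0" by simp
  moreover have "n = 2 * 2^k - 1" using kn by simp
  ultimately have "u < 2^k" by linarith
  moreover have "2 ^ dep u \<le> u" using dep_bounds[of u] assms by auto
  ultimately have "(2::nat) ^ dep u < 2^k" by linarith
  then show "dep u < k" by (rule power_less_imp_less_exp[rotated]) simp
next
  assume "dep u < k"
  then have "(2::nat)^Suc (dep u) \<le> 2^k" by (intro power_increasing) auto
  moreover have "u < 2 ^ Suc (dep u)" using dep_bounds[of u] assms by auto
  ultimately have "2*u+1 < 2^(k+1)" by simp
  then show "2*u \<le> n" using kn by simp
qed

lemma dbl2: assumes "u \<ge> 1" "dep u < k" shows "2*u+1 \<le> n"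
proof -
  have "(2::nat)^Suc (dep u) \<le> 2^k" using assms by (intro power_increasing) auto
  moreover have "u < 2 ^ Suc (dep u)" using dep_bounds[of u] assms by auto
  ultimately have "2*u+1 < 2^(k+1)" by simp
  then show ?thesis using kn by simp
qed

definition S :: "nat set \<Rightarrow> nat set" where
  "S M = {u\<in>{2..n}. u \<notin> M \<and> tparent 2 u \<in> M}"
definition B :: "nat set \<Rightarrow> int" where
  "B M = (\<Sum>u\<in>S M. gg (k - dep u))"
definition corr :: "nat set \<Rightarrow> nat \<Rightarrow> int" where
  "corr M x = (if x \<noteq> 1 \<and> tparent 2 x \<notin> M then -1 - DD (k - dep x)
     else if (\<exists>c. tchild n 2 x c \<and> c \<notin> M) then DD (k - dep x - 1) - gg (k - dep x - 1) else 0)"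
definition Phi where "Phi M x = B M + corr M x"

definition Inv where "Inv M x \<longleftrightarrow> M \<subseteq> {1..n} \<and> 1 \<in> M \<and> x \<in> M \<and>
   (\<forall>u\<in>M. u \<noteq> 1 \<and> u \<noteq> x \<longrightarrow> tparent 2 u \<in> M)"

lemma S_insert: assumes "y \<notin> M" "y \<in> {2..n}"
  shows "S (insert y M) = (S M - {y}) \<union> {c\<in>{2..n}. tparent 2 c = y \<and> c \<notin> M}"
proof -
  have ne: "tparent 2 c \<noteq> c" if "c \<ge> 2" for c using that by (simp add: par_eq)
  have "tparent 2 y \<noteq> y" using assms(2) unfolding tparent_def by auto
  then show ?thesis using assms ne unfolding S_def by fastforce
qed

lemma B_insert: assumes "y \<notin> M" "y \<in> {2..n}"
  shows "B (insert y M) = B M - (if tparent 2 y \<in> M then gg (k - dep y) else 0)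
     + (\<Sum>c\<in>{c\<in>{2..n}. tparent 2 c = y \<and> c \<notin> M}. gg (k - dep c))"
proof -
  let ?C = "{c\<in>{2..n}. tparent 2 c = y \<and> c \<notin> M}"
  have fin: "finite (S M)" "finite ?C" unfolding S_def by auto
  have disj: "(S M - {y}) \<inter> ?C = {}" using assms unfolding S_def by auto
  have "B (insert y M) = (\<Sum>u\<in>S M - {y}. gg (k - dep u)) + (\<Sum>c\<in>?C. gg (k - dep c))"
    unfolding B_def S_insert[OF assms] using fin disj by (simp add: sum.union_disjoint)
  moreover have "(\<Sum>u\<in>S M - {y}. gg (k - dep u)) = B M - (if tparent 2 y \<in> M then gg (k - dep y) else 0)"
  proof (cases "y \<in> S M")
    case True
    then show ?thesis unfolding B_def using fin(1) sum_diff1[of "S M" "\<lambda>u. gg (k - dep u)" y]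
      by (auto simp: S_def)
  next
    case False
    then show ?thesis unfolding B_def using assms by (auto simp: S_def)
  qed
  ultimately show ?thesis by simp
qed

lemma C_iff: assumes "y \<ge> 1"
  shows "{c\<in>{2..n}. tparent 2 c = y \<and> c \<notin> M} = {c. (c = 2*y \<or> c = 2*y+1) \<and> c \<le> n \<and> c \<notin> M}"
  using assms unfolding tparent_def by auto

lemma tp_ne: "c \<ge> 2 \<Longrightarrow> tparent 2 c \<noteq> c" unfolding tparent_def by auto

lemma step: assumes I: "Inv M x" and T: "trav_step n 2 M x y"
  shows "y \<notin> M \<and> y \<in> {1..n} \<and> Inv (insert y M) y \<and>
         Phi (insert y M) y + (if is_jump n 2 M x then 1 else 0) = Phi M x"
proof -
  have Mn: "M \<subseteq> {1..n}" and M1: "1 \<in> M" and xM: "x \<in> M"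
    and up: "\<And>u. u \<in> M \<Longrightarrow> u \<noteq> 1 \<Longrightarrow> u \<noteq> x \<Longrightarrow> tparent 2 u \<in> M"
    using I unfolding Inv_def by auto
  have xn: "x \<in> {1..n}" using Mn xM by auto
  consider (a) "case_a 2 M x" | (b) "\<not> case_a 2 M x" "case_b n 2 M x"
    | (c) "\<not> case_a 2 M x" "\<not> case_b n 2 M x" by blast
  then show ?thesis
  proof cases
    case a
    then have x1: "x \<noteq> 1" and pM: "tparent 2 x \<notin> M" unfolding case_a_def by auto
    have y: "y = tparent 2 x" using T a unfolding trav_step_def by simp
    have x2: "x \<ge> 2" using x1 xn by auto
    have yd: "y = x div 2" using y par_eq[OF x2] by simp
    have yM: "y \<notin> M" using pM y by simp
    have y2: "y \<ge> 2" using yM M1 yd x2 by (cases "y = 1") auto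
    have yn: "y \<in> {1..n}" using yd xn y2 by auto
    have dx: "dep x = Suc (dep y)" using dep_div[OF x2] yd by simp
    have dxk: "dep x \<le> k" using dep_le xn by simp
    define hx where "hx = k - dep x"
    have hy: "k - dep y = Suc hx" using dx dxk hx_def by simp
    have nj: "\<not> is_jump n 2 M x" using a unfolding is_jump_def by simp
    have inv: "Inv (insert y M) y" using Mn M1 xM up yn y unfolding Inv_def by auto
    have xc: "x = 2*y \<or> x = 2*y+1" using yd by auto
    have n2: "2*y+1 \<le> n" using dbl2[of y] y2 dx dxk by simp
    define s where "s = (if x = 2*y then 2*y+1 else 2*y)"
    have sM: "s \<notin> M"
    proof
      assume "s \<in> M"
      moreover have "s \<noteq> 1" "s \<noteq> x" "s \<ge> 2" using s_def xc y2 by auto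
      ultimately have "tparent 2 s \<in> M" using up by auto
      moreover have "tparent 2 s = y" using par_eq[OF \<open>s \<ge> 2\<close>] s_def by auto
      ultimately show False using yM by simp
    qed
    have Ceq: "{c\<in>{2..n}. tparent 2 c = y \<and> c \<notin> M} = {c. (c = 2*y \<or> c = 2*y+1) \<and> c \<le> n \<and> c \<notin> M}"
      using y2 by (intro C_iff) simp
    have C: "{c\<in>{2..n}. tparent 2 c = y \<and> c \<notin> M} = {s}"
      unfolding Ceq using xc xM sM n2 s_def by auto
    have s2: "s \<ge> 2" using s_def y2 by auto
    have ds: "dep s = Suc (dep y)" using dep_div[OF s2] s_def by auto
    have hs: "k - dep s = hx" using ds dx hx_def by simp
    have Bi: "B (insert y M) = B M - (if tparent 2 y \<in> M then gg (Suc hx) else 0) + gg hx"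
      using B_insert[OF yM] y2 yn C hy hs by simp
    have cb: "corr M x = -1 - DD hx" using x1 pM unfolding corr_def hx_def by simp
    have tpy: "tparent 2 y \<noteq> y" using tp_ne y2 by simp
    have sc: "tchild n 2 y s" using tchild_iff s_def xc n2 y2 by auto
    show ?thesis
    proof (cases "tparent 2 y \<in> M")
      case True
      have "corr (insert y M) y = DD hx - gg hx"
      proof -
        have "s \<noteq> y" using s_def y2 by auto
        then have "\<exists>c. tchild n 2 y c \<and> c \<notin> insert y M" using sc sM by blast
        then show ?thesis unfolding corr_def using True hy by simp
      qed
      then show ?thesis using Bi True cb yM yn inv nj unfolding Phi_def by (simp add: gg_Suc)
    next
      case False
      have "corr (insert y M) y = -1 - DD (Suc hx)"
        unfolding corr_def using False tpy y2 hy by simp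
      then show ?thesis using Bi False cb yM yn inv nj unfolding Phi_def by (simp add: DD_Suc)
    qed
  next
    case b
    have nx: "x = 1 \<or> tparent 2 x \<in> M" using b unfolding case_a_def by auto
    have yc: "tchild n 2 x y" and yM: "y \<notin> M" using T b unfolding trav_step_def by auto
    have x1: "x \<ge> 1" and yx: "y = 2*x \<or> y = 2*x+1" and yle: "y \<le> n"
      using yc tchild_iff by auto
    have y2: "y \<ge> 2" using x1 yx by auto
    have tpy: "tparent 2 y = x" using par_eq[OF y2] yx by auto
    have dy: "dep y = Suc (dep x)" using dep_div[OF y2] yx by auto
    have dyk: "dep y \<le> k" using dep_le yle y2 by simp
    define hy where "hy = k - dep y"
    have hx: "k - dep x = Suc hy" using dy dyk hy_def by simp
    have nj: "\<not> is_jump n 2 M x" using b unfolding is_jump_def by simp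
    have yn: "y \<in> {1..n}" using y2 yle by auto
    have inv: "Inv (insert y M) y" using Mn M1 xM up yn nx unfolding Inv_def by auto
    have cb: "corr M x = DD hy - gg hy" using nx b hx unfolding corr_def case_b_def by auto
    have chM: "c \<notin> M" if "c = 2*y \<or> c = 2*y+1" for c
    proof
      assume cM: "c \<in> M"
      have "c \<ge> 2" "c \<noteq> x" using that y2 x1 yx by auto
      then have "tparent 2 c \<in> M" using up cM by auto
      moreover have "tparent 2 c = y" using par_eq[OF \<open>c \<ge> 2\<close>] that by auto
      ultimately show False using yM by simp
    qed
    have Ceq: "{c\<in>{2..n}. tparent 2 c = y \<and> c \<notin> M} = {c. (c = 2*y \<or> c = 2*y+1) \<and> c \<le> n \<and> c \<notin> M}"
      using y2 by (intro C_iff) simp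
    have C: "{c\<in>{2..n}. tparent 2 c = y \<and> c \<notin> M} = {c. (c = 2*y \<or> c = 2*y+1) \<and> c \<le> n}"
      unfolding Ceq using chM by auto
    show ?thesis
    proof (cases "dep y < k")
      case True
      then have "hy \<noteq> 0" using hy_def by simp
      then obtain m where m: "hy = Suc m" using not0_implies_Suc by blast
      have n2: "2*y+1 \<le> n" using dbl2[of y] y2 True by simp
      have C2: "{c. (c = 2*y \<or> c = 2*y+1) \<and> c \<le> n} = {2*y, 2*y+1}" using n2 by auto
      have d1: "dep (2*y) = Suc (dep y)" "dep (2*y+1) = Suc (dep y)"
        using dep_div[of "2*y"] dep_div[of "2*y+1"] y2 by auto
      have h1: "k - dep (2*y) = m" "k - dep (2*y+1) = m" using d1 m hy_def by auto
      have Bi: "B (insert y M) = B M - gg (Suc m) + 2 * gg m"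
        using B_insert[OF yM] yn y2 C C2 h1 tpy xM m hy_def by simp
      have ex: "\<exists>c. tchild n 2 y c \<and> c \<notin> insert y M"
        using tchild_iff n2 y2 chM by (intro exI[of _ "2*y"]) auto
      have "corr (insert y M) y = DD m - gg m"
        unfolding corr_def using ex tpy xM m hy_def by simp
      then show ?thesis using Bi cb yM yn inv nj m unfolding Phi_def by (simp add: gg_Suc DD_Suc)
    next
      case False
      then have hy0: "hy = 0" using hy_def dyk by simp
      have n2: "\<not> 2*y \<le> n" using dbl[of y] y2 False by simp
      have C2: "{c. (c = 2*y \<or> c = 2*y+1) \<and> c \<le> n} = {}" using n2 by auto
      have Bi: "B (insert y M) = B M - gg 0"
        using B_insert[OF yM, unfolded C C2] yn y2 tpy xM hy_def hy0 by simp
      have ex: "\<not> (\<exists>c. tchild n 2 y c \<and> c \<notin> insert y M)"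
        using tchild_iff n2 by auto
      have "corr (insert y M) y = 0"
      proof -
        have c1: "\<not> (y \<noteq> 1 \<and> tparent 2 y \<notin> insert y M)" using tpy xM by simp
        show ?thesis unfolding corr_def by (simp only: if_not_P[OF c1] if_not_P[OF ex])
      qed
      then show ?thesis using Bi cb yM yn inv nj hy0 unfolding Phi_def by (simp add: gg0 DD0)
    qed
  next
    case c
    have nx: "x = 1 \<or> tparent 2 x \<in> M" using c unfolding case_a_def by auto
    have yl: "tleaf n 2 y" and yM: "y \<notin> M" using T c unfolding trav_step_def by auto
    have y2: "y \<ge> 2" and yle: "y \<le> n" and nch: "\<And>j. \<not> tchild n 2 y j"
      using yl unfolding tleaf_def by auto
    have n2: "\<not> 2*y \<le> n" using nch[of "2*y"] tchild_iff y2 by auto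
    have dy: "dep y = k" using dbl[of y] n2 y2 dep_le[of y] yle by simp
    have j: "is_jump n 2 M x" using c unfolding is_jump_def by simp
    have yn: "y \<in> {1..n}" using y2 yle by auto
    have inv: "Inv (insert y M) y" using Mn M1 xM up yn nx unfolding Inv_def by auto
    have cb: "corr M x = 0" using nx c unfolding corr_def case_b_def by auto
    have Ceq: "{c\<in>{2..n}. tparent 2 c = y \<and> c \<notin> M} = {c. (c = 2*y \<or> c = 2*y+1) \<and> c \<le> n \<and> c \<notin> M}"
      using y2 by (intro C_iff) simp
    have C: "{c\<in>{2..n}. tparent 2 c = y \<and> c \<notin> M} = {}"
      unfolding Ceq using n2 by auto
    have tpy: "tparent 2 y \<noteq> y" using tp_ne y2 by simp
    show ?thesis
    proof (cases "tparent 2 y \<in> M")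
      case True
      have Bi: "B (insert y M) = B M - 1"
        using B_insert[OF yM, unfolded C] yn y2 True dy by (simp add: gg0)
      have "corr (insert y M) y = 0" unfolding corr_def using True nch by simp
      then show ?thesis using Bi cb yM yn inv j unfolding Phi_def by simp
    next
      case False
      have Bi: "B (insert y M) = B M"
        using B_insert[OF yM, unfolded C] yn y2 False by simp
      have "corr (insert y M) y = -1" unfolding corr_def using False tpy y2 dy by (simp add: DD0)
      then show ?thesis using Bi cb yM yn inv j unfolding Phi_def by simp
    qed
  qed
qed

lemma Phi_init: "Phi {1} 1 = DD k"
proof -
  have S1: "S {1} = {2, 3}" using n3 unfolding S_def tparent_def by auto
  have d1: "dep 1 = 0" by (simp add: dep.simps)
  have d2: "dep 2 = 1" "dep 3 = 1" by (simp_all add: dep.simps)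
  have B1: "B {1} = 2 * gg (k - 1)" unfolding B_def S1 using d2 by simp
  have ex: "\<exists>c. tchild n 2 1 c \<and> c \<notin> {1}" using n3 by (intro exI[of _ 2]) (auto simp: tchild_iff)
  have "corr {1} 1 = DD (k - 1) - gg (k - 1)" unfolding corr_def using ex d1 by simp
  moreover obtain m where "k = Suc m" using k1 by (cases k) auto
  ultimately show ?thesis using B1 unfolding Phi_def by (simp add: DD_Suc)
qed

lemma Phi_final: assumes "x \<in> {1..n}" shows "Phi {1..n} x = 0"
proof -
  have "S {1..n} = {}" unfolding S_def by auto
  then have "B {1..n} = 0" unfolding B_def by simp
  moreover have "x \<noteq> 1 \<longrightarrow> tparent 2 x \<in> {1..n}" using assms par_eq[of x] by auto
  moreover have "\<not> (\<exists>c. tchild n 2 x c \<and> c \<notin> {1..n})" using tchild_iff by auto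
  ultimately show ?thesis unfolding Phi_def corr_def by auto
qed

lemma main_ind: assumes ex: "execution n 3 v"
  shows "K \<in> {1..n} \<Longrightarrow> Inv (v`{1..K}) (v K) \<and> card (v`{1..K}) = K \<and>
     Phi (v`{1..K}) (v K) + int (card {j\<in>{1..K-1}. is_jump n 2 (v`{1..j}) (v j)}) = Phi {1} 1"
proof (induction K)
  case 0 then show ?case by simp
next
  case (Suc K)
  have v1: "v 1 = 1" and tr: "\<And>j. j \<in> {1..n-1} \<Longrightarrow> trav_step n 2 (v`{1..j}) (v j) (v (Suc j))"
    using ex unfolding execution_def by auto
  show ?case
  proof (cases "K = 0")
    case True
    have "v`{1..Suc K} = {1}" using True v1 by auto
    moreover have "Inv {1} 1" unfolding Inv_def using n3 by auto
    ultimately show ?thesis using True by simp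
  next
    case False
    then have IH: "Inv (v`{1..K}) (v K) \<and> card (v`{1..K}) = K \<and>
     Phi (v`{1..K}) (v K) + int (card {j\<in>{1..K-1}. is_jump n 2 (v`{1..j}) (v j)}) = Phi {1} 1"
      using Suc by auto
    have K1: "K \<ge> 1" using False by simp
    have T: "trav_step n 2 (v`{1..K}) (v K) (v (Suc K))" using tr False Suc.prems by auto
    note st = step[OF conjunct1[OF IH] T]
    have ins: "v`{1..Suc K} = insert (v (Suc K)) (v`{1..K})"
      using atLeastAtMostSuc_conv[of 1 K] by auto
    have fin: "finite (v`{1..K})" by simp
    let ?J = "\<lambda>j. is_jump n 2 (v`{1..j}) (v j)"
    have jset: "{j\<in>{1..Suc K-1}. ?J j} = {j\<in>{1..K-1}. ?J j} \<union> (if ?J K then {K} else {})"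
    proof (rule set_eqI)
      fix x show "x \<in> {j\<in>{1..Suc K-1}. ?J j} \<longleftrightarrow> x \<in> {j\<in>{1..K-1}. ?J j} \<union> (if ?J K then {K} else {})"
        using False by (cases "x = K") auto
    qed
    have cj: "card {j\<in>{1..Suc K-1}. ?J j} = card {j\<in>{1..K-1}. ?J j} + (if ?J K then 1 else 0)"
    proof (cases "?J K")
      case True
      have "finite {j\<in>{1..K-1}. ?J j}" "K \<notin> {j\<in>{1..K-1}. ?J j}" using K1 by auto
      then have "card (insert K {j\<in>{1..K-1}. ?J j}) = Suc (card {j\<in>{1..K-1}. ?J j})"
        by (rule card_insert_disjoint)
      moreover have "{j\<in>{1..Suc K-1}. ?J j} = insert K {j\<in>{1..K-1}. ?J j}"
        unfolding jset using True by simp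
      ultimately show ?thesis using True by simp
    next
      case False
      then show ?thesis unfolding jset by simp
    qed
    show ?thesis unfolding ins using st IH fin cj by (auto simp: card_insert_if)
  qed
qed

lemma jumps: assumes ex: "execution n 3 v" shows "int (num_jumps n 3 v) = DD k"
proof -
  have nn: "n \<in> {1..n}" using n3 by simp
  note mi = main_ind[OF ex nn]
  have Msub: "v`{1..n} \<subseteq> {1..n}" and vn: "v n \<in> v`{1..n}" using mi unfolding Inv_def by auto
  have "v`{1..n} = {1..n}" using card_subset_eq[OF _ Msub] mi by simp
  then have "Phi (v`{1..n}) (v n) = 0" using Phi_final vn by simp
  then show ?thesis using mi Phi_init unfolding num_jumps_def by simp
qed

end

theorem mainTheorem5:
  fixes k n :: nat and v :: "nat \<Rightarrow> nat"
  assumes "k \<ge> 1"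
    and "n = 2 ^ (k + 1) - 1"
    and "execution n 3 v"
  shows "num_jumps n 3 v = (\<Sum>i<k. fseq i) + k
       \<and> 2 * num_jumps n 3 v = fseq (k + 1)
       \<and> num_jumps n 3 v = n div 3"
proof -
  have J: "int (num_jumps n 3 v) = DD k" using jumps[OF assms(2) assms(1) assms(3)] .
  have D: "DD k = int ((\<Sum>i<k. fseq i) + k)"
    unfolding DD_def gg_def by (simp add: sum.distrib of_nat_sum)
  have "int (num_jumps n 3 v) = int ((\<Sum>i<k. fseq i) + k)" using J D by (rule trans)
  then have 1: "num_jumps n 3 v = (\<Sum>i<k. fseq i) + k" by (simp only: of_nat_eq_iff)
  have "int (fseq (k+1)) = 2 * DD k" using gg_Suc[of k] unfolding gg_def by simp
  have 2: "2 * num_jumps n 3 v = fseq (k + 1)" using 1 by simp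
  have c: "3 * DD k = 2^(k+1) - 1 - (if even k then 1 else 0)" using closed by blast
  have "int n = 2^(k+1) - 1" using assms(2) by (simp add: of_nat_diff)
  then have "int n = 3 * int (num_jumps n 3 v) + (if even k then 1 else 0)" using c J by simp
  then have "n = 3 * num_jumps n 3 v + (if even k then 1 else 0)" by (cases "even k") simp_all
  then have 3: "num_jumps n 3 v = n div 3" by (cases "even k") simp_all
  show ?thesis using 1 2 3 by simp
qed

end
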